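(* Let $a,b,c\ge 0$ and let $I=I_{L(a,b,c)}\subseteq Q$ be the edge ideal of the graph $L(a,b,c)$. For every total order $<$ on $G(I)$ in which $xy$ is the least element, the Lyubeznik resolution $\mathbb{L}_<$ is the minimal $Q$-free resolution of $Q/I$.
   Context: $L(a,b,c)$ is the graph with vertex set $\{x,y\}\cup\{x_i\}_{i=1}^a\cup\{y_j\}_{j=1}^b\cup\{z_k\}_{k=1}^c$ and edges $\{x,y\}$, $\{x,x_i\}$ ($1\le i\le a$), $\{y,y_j\}$ ($1\le j\le b$), $\{x,z_k\},\{y,z_k\}$ ($1\le k\le c$). $Q$ is the polynomial ring over a field $\Bbbk$ in these vertices as variables, and the edge ideal is generated by the products of the endpoints of the edges. For a monomial ideal $I$ with minimal generating set $G(I)$, $m_U=\mathrm{lcm}(U)$ for $U\subseteq G(I)$, the Taylor resolution $\mathbb{T}$ has basis $e_U$ ($U\subseteq G(I)$, $|U|=i$ in degree $i$) and differential $\partial(e_U)=\sum_{u\in U}(-1)^{|\{v\in U:v<u\}|}\frac{m_U}{m_{U\setminus\{u\}}}e_{U\setminus\{u\}}$. For a total order $<$ on $G(I)$, the Lyubeznik resolution $\mathbb{L}_<$ is the subcomplex of $\mathbb{T}$ spanned by those $e_U$, $U=\{u_{i_1}<\cdots<u_{i_s}\}$, such that for every $t<s$ and every generator $u_q<u_{i_t}$, $u_q$ does not divide $\mathrm{lcm}(u_{i_t},u_{i_{t+1}},\ldots,u_{i_s})$; it is a free resolution of $Q/I$. *)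

theory Defs
  imports Main
begin

datatype vtx = VX | VY | XI nat | YJ nat | ZK nat

definition Lverts :: "nat \<Rightarrow> nat \<Rightarrow> nat \<Rightarrow> vtx set" where
  "Lverts a b c = {VX, VY} \<union> XI ` {1..a} \<union> YJ ` {1..b} \<union> ZK ` {1..c}"

definition Ledges :: "nat \<Rightarrow> nat \<Rightarrow> nat \<Rightarrow> vtx set set" where
  "Ledges a b c = {{VX, VY}} \<union> (\<lambda>i. {VX, XI i}) ` {1..a} \<union> (\<lambda>j. {VY, YJ j}) ` {1..b}
     \<union> (\<lambda>k. {VX, ZK k}) ` {1..c} \<union> (\<lambda>k. {VY, ZK k}) ` {1..c}"

text \<open>Monomials of Q = k[vertices] are represented by exponent vectors.\<close>
type_synonym mono = "vtx \<Rightarrow> nat"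

definition mdvd :: "mono \<Rightarrow> mono \<Rightarrow> bool" where
  "mdvd m n \<longleftrightarrow> (\<forall>v. m v \<le> n v)"

text \<open>lcm of a finite set of monomials (lcm of the empty set is 1).\<close>
definition mlcm :: "mono set \<Rightarrow> mono" where
  "mlcm U = (\<lambda>v. Max (insert 0 ((\<lambda>m. m v) ` U)))"

definition edge_mono :: "vtx set \<Rightarrow> mono" where
  "edge_mono e = (\<lambda>v. if v \<in> e then 1 else 0)"

definition min_gens :: "mono set \<Rightarrow> mono set" where
  "min_gens S = {s \<in> S. \<not> (\<exists>t \<in> S. mdvd t s \<and> t \<noteq> s)}"

definition GL :: "nat \<Rightarrow> nat \<Rightarrow> nat \<Rightarrow> mono set" where
  "GL a b c = min_gens (edge_mono ` Ledges a b c)"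

definition lyub_adm :: "mono set \<Rightarrow> (mono \<times> mono) set \<Rightarrow> mono set \<Rightarrow> bool" where
  "lyub_adm G R U \<longleftrightarrow> U \<subseteq> G \<and>
     (\<forall>u \<in> U. (\<exists>w \<in> U. (u, w) \<in> R) \<longrightarrow>
        (\<forall>q \<in> G. (q, u) \<in> R \<longrightarrow> \<not> mdvd q (mlcm {w \<in> U. w = u \<or> (u, w) \<in> R})))"

text \<open>The Lyubeznik complex (a subcomplex of the Taylor complex, a free resolution of Q/I) is
  minimal iff no entry of its differential is a unit.  The entry of the differential at
  (e_{U - {u}}, e_U) is \<plusminus> m_U / m_{U - {u}}, a monomial, which is a unit iff it equals 1,
  i.e. iff m_U = m_{U - {u}}.\<close>
definition lyubeznik_minimal :: "mono set \<Rightarrow> (mono \<times> mono) set \<Rightarrow> bool" where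
  "lyubeznik_minimal G R \<longleftrightarrow>
     (\<forall>U. lyub_adm G R U \<longrightarrow>
        (\<forall>u \<in> U. lyub_adm G R (U - {u}) \<longrightarrow> mlcm U \<noteq> mlcm (U - {u})))"

end

theory Submission
  imports Defs
begin

lemma min_exists:
  assumes "finite S" "S \<noteq> {}" "trans R" "total_on T R" "S \<subseteq> T"
  shows "\<exists>m\<in>S. \<forall>s\<in>S. s \<noteq> m \<longrightarrow> (m, s) \<in> R"
  using assms(1,2,5)
proof (induction S rule: finite_induct)
  case empty then show ?case by simp
next
  case (insert x F)
  show ?case
  proof (cases "F = {}")
    case True then show ?thesis by simp
  next
    case False
    have FT: "F \<subseteq> T" "x \<in> T" using insert.prems by auto
    obtain m where m: "m \<in> F" "\<forall>s\<in>F. s \<noteq> m \<longrightarrow> (m, s) \<in> R"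
      using insert.IH[OF False FT(1)] by blast
    have "x \<noteq> m" using m(1) insert.hyps(2) by blast
    moreover have "m \<in> T" using FT m by blast
    ultimately have "(x, m) \<in> R \<or> (m, x) \<in> R" using assms(4) FT(2) unfolding total_on_def by blast
    then show ?thesis
    proof
      assume xm: "(x, m) \<in> R"
      have "\<forall>s\<in>insert x F. s \<noteq> x \<longrightarrow> (x, s) \<in> R"
      proof (intro ballI impI)
        fix s assume s: "s \<in> insert x F" "s \<noteq> x"
        then have sF: "s \<in> F" by blast
        show "(x, s) \<in> R"
        proof (cases "s = m")
          case True then show ?thesis using xm by simp
        next
          case False
          then have "(m, s) \<in> R" using m sF by blast
          then show ?thesis using xm assms(3) unfolding trans_def by blast
        qed
      qed
      then show ?thesis by blast
    next
      assume "(m, x) \<in> R" then show ?thesis using m by blast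
    qed
  qed
qed

lemma mlcm_zero_iff:
  assumes "finite S"
  shows "mlcm S v = 0 \<longleftrightarrow> (\<forall>w\<in>S. w v = 0)"
proof -
  have "mlcm S v = 0 \<longleftrightarrow> mlcm S v \<le> 0" by simp
  also have "\<dots> \<longleftrightarrow> (\<forall>w\<in>S. w v \<le> 0)"
    unfolding mlcm_def using assms by (subst Max_le_iff) auto
  finally show ?thesis by simp
qed

lemma edge_mono_dvd: "mdvd (edge_mono e) (edge_mono f) \<longleftrightarrow> e \<subseteq> f"
  unfolding mdvd_def edge_mono_def
  by (auto simp: subset_iff split: if_splits)

lemma Ledges_cases: "e \<in> Ledges a b c \<Longrightarrow> e = {VX,VY} \<or> (\<exists>i. e = {VX, XI i}) \<or> (\<exists>j. e = {VY, YJ j})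
   \<or> (\<exists>k. e = {VX, ZK k}) \<or> (\<exists>k. e = {VY, ZK k})"
  unfolding Ledges_def by blast

lemma Ledges_two: "e \<in> Ledges a b c \<Longrightarrow> \<exists>p q. e = {p, q} \<and> p \<noteq> q"
  apply (drule Ledges_cases) apply (elim disjE exE) by blast+

lemma Ledges_fin: "finite (Ledges a b c)"
  unfolding Ledges_def by simp

lemma e0L: "{VX,VY} \<in> Ledges a b c"
  unfolding Ledges_def by simp

lemma GLm: "e \<in> Ledges a b c \<Longrightarrow> e = {VX,VY} \<or>
   (\<exists>p r. e = {p, r} \<and> p \<in> {VX, VY} \<and> r \<notin> {VX, VY})"
  apply (drule Ledges_cases) apply (elim disjE exE) by blast+

lemma two_sub: "{p, q} \<subseteq> {p', q'} \<Longrightarrow> p \<noteq> q \<Longrightarrow> {p, q} = {p', q'}"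
  by blast

lemma min_gens_id: "(\<And>t s. t \<in> S \<Longrightarrow> s \<in> S \<Longrightarrow> t \<noteq> s \<Longrightarrow> \<not> mdvd t s) \<Longrightarrow> min_gens S = S"
  unfolding min_gens_def by blast

lemma GL_eq: "GL a b c = edge_mono ` Ledges a b c"
  unfolding GL_def
proof (rule min_gens_id)
  fix t s assume ts: "t \<in> edge_mono ` Ledges a b c" "s \<in> edge_mono ` Ledges a b c" "t \<noteq> s"
  show "\<not> mdvd t s"
  proof
    assume d: "mdvd t s"
    obtain e f where ef: "e \<in> Ledges a b c" "f \<in> Ledges a b c" "t = edge_mono e" "s = edge_mono f"
      using ts by blast
    then have sub: "e \<subseteq> f" using d edge_mono_dvd by simp
    obtain p q where pq: "e = {p, q}" "p \<noteq> q" using Ledges_two[OF ef(1)] by blast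
    obtain p' q' where pq': "f = {p', q'}" using Ledges_two[OF ef(2)] by blast
    have "e = f" using two_sub[of p q p' q'] sub pq pq' by simp
    then show False using ef ts by simp
  qed
qed

lemma GL_finite: "finite (GL a b c)"
  unfolding GL_eq using Ledges_fin by simp

lemma GL_mem: "m \<in> GL a b c \<Longrightarrow> m = edge_mono {VX, VY} \<or>
   (\<exists>p r. m = edge_mono {p, r} \<and> p \<in> {VX, VY} \<and> r \<notin> {VX, VY})"
proof -
  assume "m \<in> GL a b c"
  then obtain e where e: "e \<in> Ledges a b c" "m = edge_mono e" unfolding GL_eq by blast
  from GLm[OF e(1)] show ?thesis
  proof
    assume "e = {VX, VY}" then show ?thesis using e by simp
  next
    assume "\<exists>p r. e = {p, r} \<and> p \<in> {VX, VY} \<and> r \<notin> {VX, VY}"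
    then obtain p r where "e = {p, r}" "p \<in> {VX, VY}" "r \<notin> {VX, VY}" by blast
    then show ?thesis using e by blast
  qed
qed

lemma edge_mono_eq: "edge_mono e v = (if v \<in> e then 1 else 0)"
  by (simp add: edge_mono_def)

lemma key:
  assumes "finite U" "U \<subseteq> GL a b c" "u \<in> U"
    and H: "card (U - {edge_mono {VX, VY}}) \<le> 1 \<or> (\<forall>w\<in>U-{edge_mono {VX, VY}}. w VX = 0)
      \<or> (\<forall>w\<in>U-{edge_mono {VX, VY}}. w VY = 0)"
  shows "\<exists>v. u v \<noteq> 0 \<and> (\<forall>w\<in>U-{u}. w v = 0)"
proof (cases "u = edge_mono {VX, VY}")
  case True
  note e0 = True
  show ?thesis
  proof (cases "card (U - {edge_mono {VX, VY}}) \<le> 1")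
    case True
    show ?thesis
    proof (cases "U - {edge_mono {VX, VY}} = {}")
      case True
      then have Uu: "U - {u} = {}" using e0 by simp
      have "u VX \<noteq> 0" using e0 by (simp add: edge_mono_eq)
      then show ?thesis using Uu by (intro exI[of _ VX]) blast
    next
      case False
      then obtain w where w: "w \<in> U - {edge_mono {VX, VY}}" by auto
      have fin': "finite (U - {edge_mono {VX, VY}})" using assms(1) by simp
      have one: "U - {edge_mono {VX, VY}} = {w}"
      proof (rule ccontr)
        assume "U - {edge_mono {VX, VY}} \<noteq> {w}"
        then obtain w' where "w' \<in> U - {edge_mono {VX, VY}}" "w' \<noteq> w" using w by auto
        then have "{w, w'} \<subseteq> U - {edge_mono {VX, VY}}" using w by auto
        then have "card {w, w'} \<le> card (U - {edge_mono {VX, VY}})" using fin' by (intro card_mono) auto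
        then show False using True \<open>w' \<noteq> w\<close> by simp
      qed
      obtain p r where pr: "w = edge_mono {p, r}" "p \<in> {VX, VY}" "r \<notin> {VX, VY}"
        using GL_mem[of w a b c] w assms(2) by auto
      have Uu: "U - {u} = {w}" using e0 one by simp
      show ?thesis
      proof (cases "p = VX")
        case True
        then have "w VY = 0" using pr by (auto simp: edge_mono_eq)
        moreover have "u VY \<noteq> 0" using e0 by (simp add: edge_mono_eq)
        ultimately show ?thesis using Uu by (intro exI[of _ VY]) simp
      next
        case False
        then have "p = VY" using pr by simp
        then have "w VX = 0" using pr by (auto simp: edge_mono_eq)
        moreover have "u VX \<noteq> 0" using e0 by (simp add: edge_mono_eq)
        ultimately show ?thesis using Uu by (intro exI[of _ VX]) simp
      qed
    qed
  next
    case False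
    then have "(\<forall>w\<in>U-{edge_mono {VX, VY}}. w VX = 0) \<or> (\<forall>w\<in>U-{edge_mono {VX, VY}}. w VY = 0)"
      using H by simp
    then show ?thesis
    proof
      assume "\<forall>w\<in>U-{edge_mono {VX, VY}}. w VX = 0"
      moreover have "u VX \<noteq> 0" using e0 by (simp add: edge_mono_eq)
      ultimately show ?thesis using e0 by (intro exI[of _ VX]) simp
    next
      assume "\<forall>w\<in>U-{edge_mono {VX, VY}}. w VY = 0"
      moreover have "u VY \<noteq> 0" using e0 by (simp add: edge_mono_eq)
      ultimately show ?thesis using e0 by (intro exI[of _ VY]) simp
    qed
  qed
next
  case False
  obtain p r where pr: "u = edge_mono {p, r}" "p \<in> {VX, VY}" "r \<notin> {VX, VY}"
    using GL_mem[of u a b c] False assms(2,3) by auto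
  have "\<forall>w\<in>U-{u}. w r = 0"
  proof
    fix w assume w: "w \<in> U - {u}"
    show "w r = 0"
    proof (rule ccontr)
      assume wr: "w r \<noteq> 0"
      have wne: "w \<noteq> edge_mono {VX, VY}"
      proof
        assume "w = edge_mono {VX, VY}"
        then have "w r = 0" using pr(3) by (simp add: edge_mono_eq)
        then show False using wr by simp
      qed
      obtain p' r' where pr': "w = edge_mono {p', r'}" "p' \<in> {VX, VY}" "r' \<notin> {VX, VY}"
        using GL_mem[of w a b c] wne w assms(2) by auto
      have "r \<in> {p', r'}"
      proof (rule ccontr)
        assume "r \<notin> {p', r'}"
        then have "w r = 0" using pr'(1) by (simp add: edge_mono_eq)
        then show False using wr by simp
      qed
      moreover have "r \<noteq> p'" using pr(3) pr'(2) by blast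
      ultimately have rr: "r' = r" by blast
      have pp: "p' \<noteq> p"
      proof
        assume "p' = p"
        then have "w = u" using pr(1) pr'(1) rr by simp
        then show False using w by simp
      qed
      have fin': "finite (U - {edge_mono {VX, VY}})" using assms(1) by simp
      have "{u, w} \<subseteq> U - {edge_mono {VX, VY}}" using w wne False assms(3) by auto
      then have "card {u, w} \<le> card (U - {edge_mono {VX, VY}})" using fin' by (intro card_mono) auto
      moreover have "u \<noteq> w" using w by auto
      ultimately have c2: "\<not> card (U - {edge_mono {VX, VY}}) \<le> 1" by simp
      have cov: "(u VX \<noteq> 0 \<or> w VX \<noteq> 0) \<and> (u VY \<noteq> 0 \<or> w VY \<noteq> 0)"
      proof (cases "p = VX")
        case True
        then have "p' = VY" using pp pr'(2) by auto
        then show ?thesis using True pr(1) pr'(1) by (simp add: edge_mono_eq)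
      next
        case False
        then have "p = VY" "p' = VX" using pp pr(2) pr'(2) by auto
        then show ?thesis using pr(1) pr'(1) by (simp add: edge_mono_eq)
      qed
      moreover have uS: "u \<in> U - {edge_mono {VX, VY}}" and wS: "w \<in> U - {edge_mono {VX, VY}}"
        using \<open>{u, w} \<subseteq> _\<close> by auto
      moreover have "(\<forall>w\<in>U-{edge_mono {VX, VY}}. w VX = 0) \<or> (\<forall>w\<in>U-{edge_mono {VX, VY}}. w VY = 0)"
        using H c2 by simp
      ultimately have "(u VX = 0 \<and> w VX = 0) \<or> (u VY = 0 \<and> w VY = 0)" by blast
      then show False using cov by linarith
    qed
  qed
  moreover have "u r \<noteq> 0" using pr by (simp add: edge_mono_eq)
  ultimately show ?thesis by (intro exI[of _ r] conjI)
qed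

theorem mainTheorem2:
  fixes a b c :: nat and R :: "(mono \<times> mono) set"
  assumes "strict_linear_order_on (GL a b c) R"
    and "R \<subseteq> GL a b c \<times> GL a b c"
    and "\<forall>u \<in> GL a b c. u \<noteq> edge_mono {VX, VY} \<longrightarrow> (edge_mono {VX, VY}, u) \<in> R"
  shows "lyubeznik_minimal (GL a b c) R"
  unfolding lyubeznik_minimal_def
proof (intro allI impI ballI)
  fix U u
  assume adm: "lyub_adm (GL a b c) R U" and u: "u \<in> U"
  define e0 where "e0 = edge_mono {VX, VY}"
  have UG: "U \<subseteq> GL a b c" using adm unfolding lyub_adm_def by simp
  have fin: "finite U" using UG GL_finite finite_subset by blast
  have e0G: "e0 \<in> GL a b c" unfolding GL_eq e0_def using e0L by blast
  have H: "card (U - {e0}) \<le> 1 \<or> (\<forall>w\<in>U-{e0}. w VX = 0) \<or> (\<forall>w\<in>U-{e0}. w VY = 0)"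
  proof (rule ccontr)
    assume nH: "\<not> ?thesis"
    then have c2: "card (U - {e0}) \<ge> 2" by simp
    have ne: "U - {e0} \<noteq> {}"
    proof
      assume E: "U - {e0} = {}"
      have "card (U - {e0}) = 0" by (simp only: E card.empty)
      then show False using c2 by linarith
    qed
    obtain m where m: "m \<in> U - {e0}" "\<forall>s\<in>U - {e0}. s \<noteq> m \<longrightarrow> (m, s) \<in> R"
      using min_exists[OF _ ne, of R "GL a b c"] fin UG assms(1)
      unfolding strict_linear_order_on_def by auto
    obtain w where w: "w \<in> U - {e0}" "w \<noteq> m"
    proof -
      have "\<not> (U - {e0} \<subseteq> {m})"
      proof
        assume "U - {e0} \<subseteq> {m}"
        then have "card (U - {e0}) \<le> card {m}" by (intro card_mono) auto
        moreover have "card {m} = 1" by simp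
        ultimately show False using c2 by linarith
      qed
      then show ?thesis using that by blast
    qed
    have mR: "(m, w) \<in> R" using m w by auto
    have e0m: "(e0, m) \<in> R" using assms(3) m UG unfolding e0_def by auto
    define S where "S = {w \<in> U. w = m \<or> (m, w) \<in> R}"
    have nd: "\<not> mdvd e0 (mlcm S)"
      using adm m mR w e0G e0m unfolding lyub_adm_def S_def by blast
    have finS: "finite S" using fin unfolding S_def by simp
    have sub: "U - {e0} \<subseteq> S" using m unfolding S_def by auto
    have "mlcm S VX = 0 \<or> mlcm S VY = 0"
    proof (rule ccontr)
      assume "\<not> ?thesis"
      then have "mdvd e0 (mlcm S)" unfolding mdvd_def e0_def edge_mono_def by auto
      then show False using nd by simp
    qed
    then have "(\<forall>w\<in>S. w VX = 0) \<or> (\<forall>w\<in>S. w VY = 0)" using mlcm_zero_iff[OF finS] by auto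
    then show False using nH sub by blast
  qed
  obtain v where v: "u v \<noteq> 0" "\<forall>w\<in>U-{u}. w v = 0"
    using key[OF fin UG u] H unfolding e0_def by blast
  have "mlcm (U - {u}) v = 0" using v mlcm_zero_iff[of "U - {u}"] fin by auto
  moreover have "mlcm U v \<noteq> 0" using v u mlcm_zero_iff[OF fin] by auto
  ultimately show "mlcm U \<noteq> mlcm (U - {u})" by metis
qed

end
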